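(* Let $u$ and $v$ be vertices of $T$ such that $v$ is not a vertex of $T^u$. Let $X$ be the set of vertices in $C_{T^u}$ that are ancestors of $v$. Suppose $X\neq\emptyset$ and let $x$ be the last vertex on the path in $T$ from $u$ to $v$ that is contained in $T^u$. Then $x\in X$, and $x$ is the deepest vertex of $X$.
   Context: Let $T$ be a rooted tree on $n$ vertices with positive edge weights. Ancestor/descendant refer to $T$, and a vertex counts as its own ancestor and descendant. $T_v$ denotes the subtree of $T$ rooted at $v$. For every non-leaf vertex $v$ of $T$ fix a child $c_1(v)$ with $|T_{c_1(v)}|$ maximal among the children of $v$; the edges $(v,c_1(v))$ are called leftmost. A subtree $R$ of $T$ (connected subgraph) is rooted at its vertex closest to the root of $T$, denoted $rt(R)$, and inherits the leftmost labelling; $R_v$ is the subtree of $R$ rooted at $v$. For $v\in V(R)$, $P_R(v)$ is the longest downward path from $v$ in $R$ using only leftmost edges; its last vertex is $l(v)$, and $l(R):=l(rt(R))$. For an integer $d$, a vertex $v$ of $R$ is $d$-balanced (in $R$) if $|R_{c_1(v)}|\le |R|-d$ (where $|R_{c_1(v)}|=0$ if $c_1(v)$ is undefined or not in $R$). $b_d(v)$ is the first $d$-balanced vertex on $P_R(v)$, or NULL if none. Define $CV(R,d)=\emptyset$ if $b_d(rt(R))$ is NULL, and otherwise, with $b=b_d(rt(R))$, $CV(R,d)=\{b\}\cup\bigcup_{w}CV(R_w,d)$, the union over the children $w$ of $b$ in $R$. Fix an integer $k\ge 4$. For a subtree $R$ with $m$ vertices, $C_R:=V(R)$ if $k\ge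 m/2-1$, and otherwise $C_R:=CV(R,m/k)\cup\{l(R),rt(R)\}$. Canonical subtrees: $T$ is canonical; if $R$ is canonical, every connected component of the forest obtained from $R$ by deleting the vertices of $C_R$ (and incident edges) is canonical. Every vertex $v$ of $T$ belongs to $C_R$ for exactly one canonical subtree $R$, denoted $T^v$. *)

theory Defs
  imports Complex_Main
begin

definition is_rtree :: "'a set \<Rightarrow> 'a \<Rightarrow> ('a \<Rightarrow> 'a) \<Rightarrow> bool" where
  "is_rtree V r par \<longleftrightarrow> finite V \<and> r \<in> V \<and> par r = r \<and>
     (\<forall>v\<in>V. par v \<in> V \<and> (\<exists>i. (par ^^ i) v = r))"

definition anc :: "('a \<Rightarrow> 'a) \<Rightarrow> 'a \<Rightarrow> 'a \<Rightarrow> bool" where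
  "anc par a v \<longleftrightarrow> (\<exists>i. (par ^^ i) v = a)"

definition children :: "'a set \<Rightarrow> 'a \<Rightarrow> ('a \<Rightarrow> 'a) \<Rightarrow> 'a \<Rightarrow> 'a set" where
  "children V r par v = {w \<in> V. w \<noteq> r \<and> par w = v}"

definition Tsub :: "'a set \<Rightarrow> ('a \<Rightarrow> 'a) \<Rightarrow> 'a \<Rightarrow> 'a set" where
  "Tsub V par w = {y \<in> V. anc par w y}"

definition leftmost_choice :: "'a set \<Rightarrow> 'a \<Rightarrow> ('a \<Rightarrow> 'a) \<Rightarrow> ('a \<Rightarrow> 'a) \<Rightarrow> bool" where
  "leftmost_choice V r par c1 \<longleftrightarrow>
     (\<forall>v\<in>V. children V r par v \<noteq> {} \<longrightarrow>
        c1 v \<in> children V r par v \<and>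
        (\<forall>w\<in>children V r par v. card (Tsub V par w) \<le> card (Tsub V par (c1 v))))"

text \<open>Subtrees (connected subgraphs) of T, identified with their vertex sets.\<close>
definition is_subtree :: "'a set \<Rightarrow> ('a \<Rightarrow> 'a) \<Rightarrow> 'a set \<Rightarrow> bool" where
  "is_subtree V par S \<longleftrightarrow> S \<subseteq> V \<and> S \<noteq> {} \<and>
     (\<exists>t\<in>S. \<forall>w\<in>S. anc par t w \<and> (\<forall>y. anc par y w \<and> anc par t y \<longrightarrow> y \<in> S))"

definition rt :: "('a \<Rightarrow> 'a) \<Rightarrow> 'a set \<Rightarrow> 'a" where
  "rt par R = (THE t. t \<in> R \<and> (\<forall>w\<in>R. anc par t w))"

definition subR :: "('a \<Rightarrow> 'a) \<Rightarrow> 'a set \<Rightarrow> 'a \<Rightarrow> 'a set" where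
  "subR par R v = {w \<in> R. anc par v w}"

text \<open>|R_{c1(v)}|, which is 0 if c1(v) is undefined (v a leaf of T) or not in R.\<close>
definition c1size :: "'a set \<Rightarrow> 'a \<Rightarrow> ('a \<Rightarrow> 'a) \<Rightarrow> ('a \<Rightarrow> 'a) \<Rightarrow> 'a set \<Rightarrow> 'a \<Rightarrow> nat" where
  "c1size V r par c1 R v =
     (if children V r par v \<noteq> {} \<and> c1 v \<in> R then card (subR par R (c1 v)) else 0)"

definition balanced :: "'a set \<Rightarrow> 'a \<Rightarrow> ('a \<Rightarrow> 'a) \<Rightarrow> ('a \<Rightarrow> 'a) \<Rightarrow> 'a set \<Rightarrow> real \<Rightarrow> 'a \<Rightarrow> bool" where
  "balanced V r par c1 R d v \<longleftrightarrow> real (c1size V r par c1 R v) \<le> real (card R) - d"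

text \<open>The i-th vertex (c1^^i) v lies on P_R(v).\<close>
definition lp_ok :: "'a set \<Rightarrow> 'a \<Rightarrow> ('a \<Rightarrow> 'a) \<Rightarrow> ('a \<Rightarrow> 'a) \<Rightarrow> 'a set \<Rightarrow> 'a \<Rightarrow> nat \<Rightarrow> bool" where
  "lp_ok V r par c1 R v i \<longleftrightarrow>
     (\<forall>j<i. children V r par ((c1 ^^ j) v) \<noteq> {} \<and> (c1 ^^ Suc j) v \<in> R)"

definition lastl :: "'a set \<Rightarrow> 'a \<Rightarrow> ('a \<Rightarrow> 'a) \<Rightarrow> ('a \<Rightarrow> 'a) \<Rightarrow> 'a set \<Rightarrow> 'a \<Rightarrow> 'a" where
  "lastl V r par c1 R v = (c1 ^^ (GREATEST i. lp_ok V r par c1 R v i)) v"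

definition bd :: "'a set \<Rightarrow> 'a \<Rightarrow> ('a \<Rightarrow> 'a) \<Rightarrow> ('a \<Rightarrow> 'a) \<Rightarrow> 'a set \<Rightarrow> real \<Rightarrow> 'a \<Rightarrow> 'a option" where
  "bd V r par c1 R d v =
     (if \<exists>i. lp_ok V r par c1 R v i \<and> balanced V r par c1 R d ((c1 ^^ i) v)
      then Some ((c1 ^^ (LEAST i. lp_ok V r par c1 R v i \<and> balanced V r par c1 R d ((c1 ^^ i) v))) v)
      else None)"

text \<open>Membership in CV(R,d) (least solution of the recursive definition).\<close>
inductive CVm :: "'a set \<Rightarrow> 'a \<Rightarrow> ('a \<Rightarrow> 'a) \<Rightarrow> ('a \<Rightarrow> 'a) \<Rightarrow> 'a set \<Rightarrow> real \<Rightarrow> 'a \<Rightarrow> bool"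
  for V r par c1 where
  here: "bd V r par c1 R d (rt par R) = Some b \<Longrightarrow> CVm V r par c1 R d b"
| below: "bd V r par c1 R d (rt par R) = Some b \<Longrightarrow> w \<in> children V r par b \<Longrightarrow> w \<in> R \<Longrightarrow>
          CVm V r par c1 (subR par R w) d x \<Longrightarrow> CVm V r par c1 R d x"

definition CV :: "'a set \<Rightarrow> 'a \<Rightarrow> ('a \<Rightarrow> 'a) \<Rightarrow> ('a \<Rightarrow> 'a) \<Rightarrow> 'a set \<Rightarrow> real \<Rightarrow> 'a set" where
  "CV V r par c1 R d = {x. CVm V r par c1 R d x}"

definition CR :: "'a set \<Rightarrow> 'a \<Rightarrow> ('a \<Rightarrow> 'a) \<Rightarrow> ('a \<Rightarrow> 'a) \<Rightarrow> nat \<Rightarrow> 'a set \<Rightarrow> 'a set" where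
  "CR V r par c1 k R =
     (if real k \<ge> real (card R) / 2 - 1 then R
      else CV V r par c1 R (real (card R) / real k)
           \<union> {lastl V r par c1 R (rt par R), rt par R})"

definition component :: "'a set \<Rightarrow> ('a \<Rightarrow> 'a) \<Rightarrow> 'a set \<Rightarrow> 'a set \<Rightarrow> bool" where
  "component V par A S \<longleftrightarrow> is_subtree V par S \<and> S \<subseteq> A \<and>
     (\<forall>S'. is_subtree V par S' \<and> S \<subseteq> S' \<and> S' \<subseteq> A \<longrightarrow> S' = S)"

inductive canonical :: "'a set \<Rightarrow> 'a \<Rightarrow> ('a \<Rightarrow> 'a) \<Rightarrow> ('a \<Rightarrow> 'a) \<Rightarrow> nat \<Rightarrow> 'a set \<Rightarrow> bool"
  for V r par c1 k where
  top: "canonical V r par c1 k V"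
| step: "canonical V r par c1 k R \<Longrightarrow> component V par (R - CR V r par c1 k R) S \<Longrightarrow>
         canonical V r par c1 k S"

definition Tcan :: "'a set \<Rightarrow> 'a \<Rightarrow> ('a \<Rightarrow> 'a) \<Rightarrow> ('a \<Rightarrow> 'a) \<Rightarrow> nat \<Rightarrow> 'a \<Rightarrow> 'a set" where
  "Tcan V r par c1 k u = (THE R. canonical V r par c1 k R \<and> u \<in> CR V r par c1 k R)"

definition depth :: "'a \<Rightarrow> ('a \<Rightarrow> 'a) \<Rightarrow> 'a \<Rightarrow> nat" where
  "depth r par w = (LEAST i. (par ^^ i) w = r)"

definition lca :: "('a \<Rightarrow> 'a) \<Rightarrow> 'a \<Rightarrow> 'a \<Rightarrow> 'a" where
  "lca par u v = (THE c. anc par c u \<and> anc par c v \<and> (\<forall>c'. anc par c' u \<and> anc par c' v \<longrightarrow> anc par c' c))"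

definition upl :: "'a \<Rightarrow> ('a \<Rightarrow> 'a) \<Rightarrow> 'a \<Rightarrow> 'a \<Rightarrow> 'a list" where
  "upl r par u a = map (\<lambda>i. (par ^^ i) u) [0..<Suc (depth r par u - depth r par a)]"

definition tpath :: "'a \<Rightarrow> ('a \<Rightarrow> 'a) \<Rightarrow> 'a \<Rightarrow> 'a \<Rightarrow> 'a list" where
  "tpath r par u v = (let c = lca par u v in upl r par u c @ tl (rev (upl r par v c)))"

end

theory Submission
  imports Defs
begin


locale tctx =
  fixes V :: "'a set" and r :: 'a and par :: "'a \<Rightarrow> 'a" and c1 :: "'a \<Rightarrow> 'a"
  assumes tree: "is_rtree V r par"
    and lm: "leftmost_choice V r par c1"
begin

lemma finV: "finite V" and rV: "r \<in> V" and parr: "par r = r"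
  and parV: "v \<in> V \<Longrightarrow> par v \<in> V" and reach: "v \<in> V \<Longrightarrow> \<exists>i. (par ^^ i) v = r"
  using tree unfolding is_rtree_def by auto

lemma iterV: "v \<in> V \<Longrightarrow> (par ^^ i) v \<in> V"
  by (induction i) (auto simp: parV)

lemma iter_r: "(par ^^ i) r = r"
  by (induction i) (auto simp: parr)

lemma iter_add: "(par ^^ (a + b)) x = (par ^^ a) ((par ^^ b) x)"
  by (simp add: funpow_add)

lemma iter_Suc: "(par ^^ Suc i) x = (par ^^ i) (par x)"
  by (simp only: funpow_Suc_right comp_def)

lemma depth_root: "v \<in> V \<Longrightarrow> (par ^^ depth r par v) v = r"
  unfolding depth_def using reach by (rule LeastI_ex)

lemma depth_r: "depth r par r = 0"
  unfolding depth_def by simp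

lemma depth0: "v \<in> V \<Longrightarrow> depth r par v = 0 \<Longrightarrow> v = r"
  using depth_root by fastforce

lemma depth_par: assumes "v \<in> V" "v \<noteq> r" shows "Suc (depth r par (par v)) = depth r par v"
proof -
  let ?n = "depth r par v"
  have n: "(par ^^ ?n) v = r" using depth_root assms by blast
  have n0: "?n \<noteq> 0" using n assms by (cases ?n) auto
  have "(par ^^ (?n - 1)) (par v) = r" using n n0 iter_Suc[of "?n - 1" v] by simp
  hence a: "depth r par (par v) \<le> ?n - 1" unfolding depth_def by (rule Least_le)
  have "(par ^^ Suc (depth r par (par v))) v = r" using depth_root[OF parV[OF assms(1)]] iter_Suc by simp
  hence "?n \<le> Suc (depth r par (par v))" unfolding depth_def by (rule Least_le)
  with a n0 show ?thesis by linarith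
qed

lemma depth_iter: "v \<in> V \<Longrightarrow> depth r par ((par ^^ i) v) = depth r par v - i"
proof (induction i arbitrary: v)
  case 0 then show ?case by simp
next
  case (Suc i)
  show ?case
  proof (cases "v = r")
    case True then show ?thesis using iter_r depth_r parr by simp
  next
    case False
    have "depth r par ((par ^^ Suc i) v) = depth r par (par v) - i"
      using Suc.IH[OF parV[OF Suc.prems]] iter_Suc by simp
    then show ?thesis using depth_par[OF Suc.prems False] by simp
  qed
qed

lemma anc_refl: "anc par a a"
  unfolding anc_def by (rule exI[of _ 0]) simp

lemma anc_trans: "anc par a b \<Longrightarrow> anc par b c \<Longrightarrow> anc par a c"
  unfolding anc_def by (metis iter_add)

lemma anc_par: "anc par (par w) w"
  unfolding anc_def by (rule exI[of _ 1]) simp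

lemma anc_V: "anc par a v \<Longrightarrow> v \<in> V \<Longrightarrow> a \<in> V"
  unfolding anc_def using iterV by blast

lemma anc_r: "v \<in> V \<Longrightarrow> anc par r v"
  unfolding anc_def using reach by blast

lemma anc_antisym: assumes "anc par a b" "anc par b a" "b \<in> V" shows "a = b"
proof -
  obtain i where i: "(par ^^ i) b = a" using assms(1) unfolding anc_def by blast
  obtain j where j: "(par ^^ j) a = b" using assms(2) unfolding anc_def by blast
  have aV: "a \<in> V" using i iterV assms(3) by blast
  have da: "depth r par a = depth r par b - i" using depth_iter[OF assms(3), of i] i by simp
  have db: "depth r par b = depth r par a - j" using depth_iter[OF aV, of j] j by simp
  show ?thesis
  proof (cases i)
    case 0 then show ?thesis using i by simp
  next
    case (Suc i')
    then have "depth r par b = 0" using da db by linarith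
    then have "b = r" using depth0 assms(3) by blast
    then show ?thesis using i iter_r by simp
  qed
qed

lemma anc_linear: "anc par a v \<Longrightarrow> anc par b v \<Longrightarrow> anc par a b \<or> anc par b a"
  unfolding anc_def
proof (elim exE)
  fix i j assume i: "(par ^^ i) v = a" and j: "(par ^^ j) v = b"
  show "(\<exists>i. (par ^^ i) b = a) \<or> (\<exists>i. (par ^^ i) a = b)"
  proof (cases "i \<le> j")
    case True
    then have "(par ^^ (j - i)) a = b" using i j iter_add[of "j-i" i v] by simp
    then show ?thesis by blast
  next
    case False
    then have "(par ^^ (i - j)) b = a" using i j iter_add[of "i-j" j v] by simp
    then show ?thesis by blast
  qed
qed

lemma anc_cases: "anc par y w \<Longrightarrow> y = w \<or> anc par y (par w)"
  unfolding anc_def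
proof (elim exE)
  fix j assume j: "(par ^^ j) w = y"
  show "y = w \<or> (\<exists>i. (par ^^ i) (par w) = y)"
    using j iter_Suc by (cases j) auto
qed

lemma anc_depth_iter: assumes "anc par a v" "v \<in> V" shows "(par ^^ (depth r par v - depth r par a)) v = a"
proof -
  obtain i where i: "(par ^^ i) v = a" using assms(1) unfolding anc_def by blast
  show ?thesis
  proof (cases "a = r")
    case True then show ?thesis using depth_root[OF assms(2)] depth_r by simp
  next
    case False
    have "i \<le> depth r par v"
    proof (rule ccontr)
      assume "\<not> ?thesis"
      then have "(par ^^ i) v = (par ^^ (i - depth r par v)) ((par ^^ depth r par v) v)"
        using iter_add[of "i - depth r par v" "depth r par v" v] by simp
      then have "(par ^^ i) v = r" using depth_root[OF assms(2)] iter_r by simp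
      then show False using i False by simp
    qed
    moreover have "depth r par a = depth r par v - i" using depth_iter[OF assms(2), of i] i by simp
    ultimately show ?thesis using i by simp
  qed
qed

lemma anc_depth_le: "anc par a v \<Longrightarrow> v \<in> V \<Longrightarrow> depth r par a \<le> depth r par v"
  unfolding anc_def using depth_iter by fastforce

lemma child_props: "w \<in> children V r par x \<Longrightarrow> w \<in> V \<and> w \<noteq> r \<and> par w = x"
  unfolding children_def by auto

lemma c1_child: "y \<in> V \<Longrightarrow> children V r par y \<noteq> {} \<Longrightarrow> c1 y \<in> children V r par y"
  using lm unfolding leftmost_choice_def by blast

lemma lp_mono: "lp_ok V r par c1 R s i \<Longrightarrow> j \<le> i \<Longrightarrow> lp_ok V r par c1 R s j"
  unfolding lp_ok_def by auto

lemma lp_monoR: "lp_ok V r par c1 R s i \<Longrightarrow> R \<subseteq> R' \<Longrightarrow> lp_ok V r par c1 R' s i"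
  unfolding lp_ok_def by auto

lemma lp_Suc: "lp_ok V r par c1 R s (Suc i) \<longleftrightarrow> lp_ok V r par c1 R s i \<and>
   children V r par ((c1 ^^ i) s) \<noteq> {} \<and> (c1 ^^ Suc i) s \<in> R"
  unfolding lp_ok_def using less_Suc_eq by auto

lemma lp_V: "lp_ok V r par c1 R s i \<Longrightarrow> s \<in> V \<Longrightarrow> (c1 ^^ i) s \<in> V"
proof (induction i)
  case 0 then show ?case by simp
next
  case (Suc i)
  then have h: "lp_ok V r par c1 R s i" "children V r par ((c1 ^^ i) s) \<noteq> {}" using lp_Suc by auto
  then show ?case using Suc c1_child child_props by auto
qed

lemma lp_par: "lp_ok V r par c1 R s (Suc i) \<Longrightarrow> s \<in> V \<Longrightarrow> par ((c1 ^^ Suc i) s) = (c1 ^^ i) s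
   \<and> (c1 ^^ Suc i) s \<noteq> r"
proof -
  assume a: "lp_ok V r par c1 R s (Suc i)" "s \<in> V"
  then have h: "lp_ok V r par c1 R s i" "children V r par ((c1 ^^ i) s) \<noteq> {}" using lp_Suc by auto
  have "(c1 ^^ i) s \<in> V" using h(1) a(2) lp_V by blast
  then have "c1 ((c1 ^^ i) s) \<in> children V r par ((c1 ^^ i) s)" using h(2) c1_child by blast
  then show ?thesis using child_props[of "c1 ((c1 ^^ i) s)"] by simp
qed

lemma lp_iter: "lp_ok V r par c1 R s i \<Longrightarrow> s \<in> V \<Longrightarrow> j \<le> i \<Longrightarrow> (par ^^ j) ((c1 ^^ i) s) = (c1 ^^ (i - j)) s"
proof (induction i arbitrary: j)
  case 0 then show ?case by simp
next
  case (Suc i)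
  show ?case
  proof (cases j)
    case 0 then show ?thesis by simp
  next
    case (Suc j')
    have "(par ^^ j) ((c1 ^^ Suc i) s) = (par ^^ j') (par ((c1 ^^ Suc i) s))" using Suc iter_Suc by simp
    also have "\<dots> = (par ^^ j') ((c1 ^^ i) s)" using lp_par Suc.prems by simp
    also have "\<dots> = (c1 ^^ (i - j')) s" using Suc.IH lp_mono Suc.prems Suc by simp
    finally show ?thesis using Suc by simp
  qed
qed

lemma lp_anc: "lp_ok V r par c1 R s i \<Longrightarrow> s \<in> V \<Longrightarrow> j \<le> i \<Longrightarrow> anc par ((c1 ^^ j) s) ((c1 ^^ i) s)"
  unfolding anc_def using lp_iter[of R s i "i - j"] by (metis diff_diff_cancel diff_le_self)

lemma lp_depth: "lp_ok V r par c1 R s i \<Longrightarrow> s \<in> V \<Longrightarrow> depth r par ((c1 ^^ i) s) = depth r par s + i"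
proof (induction i)
  case 0 then show ?case by simp
next
  case (Suc i)
  have "Suc (depth r par (par ((c1 ^^ Suc i) s))) = depth r par ((c1 ^^ Suc i) s)"
    using depth_par lp_V Suc.prems lp_par by blast
  then show ?case using lp_par[OF Suc.prems] Suc lp_mono by simp
qed

end


context tctx begin

lemma rt_eq: assumes "S \<subseteq> V" "t \<in> S" "\<forall>w\<in>S. anc par t w" shows "rt par S = t"
  unfolding rt_def
proof (rule the_equality)
  show "t \<in> S \<and> (\<forall>w\<in>S. anc par t w)" using assms by blast
  fix t' assume b: "t' \<in> S \<and> (\<forall>w\<in>S. anc par t' w)"
  then have "anc par t' t" "anc par t t'" using assms by auto
  then show "t' = t" using anc_antisym assms by blast
qed
lemma is_subtreeI: "S \<subseteq> V \<Longrightarrow> t \<in> S \<Longrightarrow> \<forall>w\<in>S. anc par t w \<and> (\<forall>y. anc par y w \<and> anc par t y \<longrightarrow> y \<in> S) \<Longrightarrow> is_subtree V par S"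
  unfolding is_subtree_def by blast

lemma subtree_rt: assumes "is_subtree V par S"
  shows "rt par S \<in> S" "\<And>w. w \<in> S \<Longrightarrow> anc par (rt par S) w"
    "\<And>w y. w \<in> S \<Longrightarrow> anc par y w \<Longrightarrow> anc par (rt par S) y \<Longrightarrow> y \<in> S" "S \<subseteq> V"
proof -
  have ex: "\<exists>t\<in>S. \<forall>w\<in>S. anc par t w \<and> (\<forall>y. anc par y w \<and> anc par t y \<longrightarrow> y \<in> S)"
    using assms unfolding is_subtree_def by (elim conjE)
  then obtain t where t: "t \<in> S" "\<forall>w\<in>S. anc par t w \<and> (\<forall>y. anc par y w \<and> anc par t y \<longrightarrow> y \<in> S)"
    by (elim bexE) 
  have SV: "S \<subseteq> V" using assms unfolding is_subtree_def by (elim conjE)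
  have "\<forall>w\<in>S. anc par t w" using t(2) by blast
  then have e: "rt par S = t" by (rule rt_eq[OF SV t(1)])
  show "rt par S \<in> S" using e t(1) by simp
  show "\<And>w. w \<in> S \<Longrightarrow> anc par (rt par S) w" using t(2) unfolding e by blast
  show "\<And>w y. w \<in> S \<Longrightarrow> anc par y w \<Longrightarrow> anc par (rt par S) y \<Longrightarrow> y \<in> S" using t(2) unfolding e by blast
  show "S \<subseteq> V" by (rule SV)
qed

lemma subtree_between: "is_subtree V par S \<Longrightarrow> a \<in> S \<Longrightarrow> w \<in> S \<Longrightarrow> anc par a y \<Longrightarrow> anc par y w \<Longrightarrow> y \<in> S"
proof -
  assume a: "is_subtree V par S" "a \<in> S" "w \<in> S" "anc par a y" "anc par y w"
  have "anc par (rt par S) y" using subtree_rt(2)[OF a(1) a(2)] a(4) by (rule anc_trans)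
  then show "y \<in> S" using subtree_rt(3)[OF a(1) a(3) a(5)] by blast
qed

lemma subtree_V: "is_subtree V par V"
  unfolding is_subtree_def using rV anc_r anc_V by blast

lemma subtree_single: "u \<in> V \<Longrightarrow> is_subtree V par {u}"
  unfolding is_subtree_def using anc_refl anc_antisym by blast

lemma subtree_subR: assumes "is_subtree V par R" "w \<in> R" shows "is_subtree V par (subR par R w)"
proof -
  have "\<forall>x\<in>subR par R w. anc par w x \<and> (\<forall>y. anc par y x \<and> anc par w y \<longrightarrow> y \<in> subR par R w)"
    unfolding subR_def using subtree_between[OF assms(1) assms(2)] by blast
  moreover have "w \<in> subR par R w" unfolding subR_def using assms anc_refl by blast
  ultimately show ?thesis unfolding is_subtree_def using subtree_rt(4)[OF assms(1)]
    unfolding subR_def by blast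
qed

lemma rt_subR: assumes "R \<subseteq> V" "w \<in> R" shows "rt par (subR par R w) = w"
  by (rule rt_eq) (use assms anc_refl in \<open>auto simp: subR_def\<close>)

lemma subtree_insert: assumes "is_subtree V par S" "x \<in> S" "w \<in> children V r par x"
  shows "is_subtree V par (insert w S)"
proof -
  note S = subtree_rt[OF assms(1)]
  note wp = child_props[OF assms(3)]
  let ?t = "rt par S"
  have tw: "anc par ?t w" using S(2)[OF assms(2)] anc_par[of w] wp anc_trans by metis
  have "\<forall>z\<in>insert w S. anc par ?t z \<and> (\<forall>y. anc par y z \<and> anc par ?t y \<longrightarrow> y \<in> insert w S)"
  proof
    fix z assume z: "z \<in> insert w S"
    show "anc par ?t z \<and> (\<forall>y. anc par y z \<and> anc par ?t y \<longrightarrow> y \<in> insert w S)"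
    proof (cases "z = w")
      case True
      have "\<forall>y. anc par y z \<and> anc par ?t y \<longrightarrow> y \<in> insert w S"
        using anc_cases True wp S(3)[OF assms(2)] by blast
      then show ?thesis using tw True by blast
    next
      case False then show ?thesis using z S by blast
    qed
  qed
  then show ?thesis unfolding is_subtree_def using S(1) S(4) wp by blast
qed

lemma subtree_union: assumes "is_subtree V par S1" "is_subtree V par S2" "z \<in> S1" "z \<in> S2"
  shows "is_subtree V par (S1 \<union> S2)"
proof -
  note A = subtree_rt[OF assms(1)] and B = subtree_rt[OF assms(2)]
  have lin: "anc par (rt par S1) (rt par S2) \<or> anc par (rt par S2) (rt par S1)"
    using anc_linear A(2)[OF assms(3)] B(2)[OF assms(4)] by blast
  {
    fix S1 S2 assume a1: "is_subtree V par S1" and a2: "is_subtree V par S2" and z1: "z \<in> S1" and z2: "z \<in> S2"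
      and l: "anc par (rt par S2) (rt par S1)"
    note A = subtree_rt[OF a1] and B = subtree_rt[OF a2]
    let ?t = "rt par S2"
    have t1S2: "rt par S1 \<in> S2" using B(3)[OF z2 A(2)[OF z1] l] .
    have "\<forall>w\<in>S1 \<union> S2. anc par ?t w \<and> (\<forall>y. anc par y w \<and> anc par ?t y \<longrightarrow> y \<in> S1 \<union> S2)"
    proof
      fix w assume w: "w \<in> S1 \<union> S2"
      show "anc par ?t w \<and> (\<forall>y. anc par y w \<and> anc par ?t y \<longrightarrow> y \<in> S1 \<union> S2)"
      proof (cases "w \<in> S2")
        case True then show ?thesis using B by blast
      next
        case False
        then have w1: "w \<in> S1" using w by blast
        have "anc par ?t w" using anc_trans l A(2)[OF w1] by blast
        moreover have "\<forall>y. anc par y w \<and> anc par ?t y \<longrightarrow> y \<in> S1 \<union> S2"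
        proof (intro allI impI)
          fix y assume y: "anc par y w \<and> anc par ?t y"
          have "anc par (rt par S1) y \<or> anc par y (rt par S1)" using anc_linear y A(2)[OF w1] by blast
          then show "y \<in> S1 \<union> S2" using A(3)[OF w1] B(3)[OF t1S2] y by blast
        qed
        ultimately show ?thesis by blast
      qed
    qed
    moreover have "S1 \<union> S2 \<subseteq> V" using A(4) B(4) by blast
    ultimately have "is_subtree V par (S1 \<union> S2)" using is_subtreeI[of "S1 \<union> S2" ?t] B(1) by blast
  } note gen = this
  show ?thesis using lin gen[OF assms] gen[OF assms(2,1,4,3)] by (metis sup_commute)
qed

lemma comp_eq: assumes "component V par A S1" "component V par A S2" "z \<in> S1" "z \<in> S2"
  shows "S1 = S2"
proof -
  have c1: "is_subtree V par S1" "S1 \<subseteq> A" "\<And>S'. is_subtree V par S' \<and> S1 \<subseteq> S' \<and> S' \<subseteq> A \<Longrightarrow> S' = S1"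
    using assms(1) unfolding component_def by auto
  have c2: "is_subtree V par S2" "S2 \<subseteq> A" "\<And>S'. is_subtree V par S' \<and> S2 \<subseteq> S' \<and> S' \<subseteq> A \<Longrightarrow> S' = S2"
    using assms(2) unfolding component_def by auto
  have u: "is_subtree V par (S1 \<union> S2)" using subtree_union c1(1) c2(1) assms(3,4) by blast
  have "S1 \<union> S2 = S1" using c1(3)[of "S1 \<union> S2"] u c1(2) c2(2) by blast
  moreover have "S1 \<union> S2 = S2" using c2(3)[of "S1 \<union> S2"] u c1(2) c2(2) by blast
  ultimately show ?thesis by blast
qed

lemma comp_exists: assumes "u \<in> A" "A \<subseteq> V" shows "\<exists>S. component V par A S \<and> u \<in> S"
proof -
  let ?P = "\<lambda>S. is_subtree V par S \<and> u \<in> S \<and> S \<subseteq> A"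
  have p0: "?P {u}" using subtree_single assms by auto
  have bnd: "\<forall>S. ?P S \<longrightarrow> card S < Suc (card V)"
  proof (intro allI impI)
    fix S assume "?P S"
    then have "S \<subseteq> V" using assms(2) by blast
    then have "card S \<le> card V" using finV by (rule card_mono[rotated])
    then show "card S < Suc (card V)" by simp
  qed
  obtain S where S: "?P S" "\<forall>S'. ?P S' \<longrightarrow> card S' \<le> card S"
    using ex_has_greatest_nat[of ?P "{u}" card "Suc (card V)", OF p0 bnd] by blast
  have max: "S' = S" if a: "is_subtree V par S' \<and> S \<subseteq> S' \<and> S' \<subseteq> A" for S'
  proof -
    have "?P S'" using a S(1) by blast
    then have c: "card S' \<le> card S" using S(2) by blast
    have "S' \<subseteq> V" using a assms(2) by blast
    then have f: "finite S'" using finV by (rule finite_subset)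
    have sub: "S \<subseteq> S'" using a by blast
    have "card S \<le> card S'" using f sub by (rule card_mono)
    then have "card S = card S'" using c by simp
    then show "S' = S" using card_subset_eq[OF f sub] by simp
  qed
  have "component V par A S"
    unfolding component_def using S(1) max by blast
  then show ?thesis using S by blast
qed

lemma bd_Some: "bd V r par c1 R d s = Some b \<Longrightarrow> \<exists>i. lp_ok V r par c1 R s i \<and> b = (c1 ^^ i) s"
proof -
  assume a: "bd V r par c1 R d s = Some b"
  let ?Q = "\<lambda>i. lp_ok V r par c1 R s i \<and> balanced V r par c1 R d ((c1 ^^ i) s)"
  have ex: "\<exists>i. ?Q i" using a unfolding bd_def by (auto split: if_splits)
  then have "b = (c1 ^^ (LEAST i. ?Q i)) s" using a unfolding bd_def by auto
  moreover have "?Q (LEAST i. ?Q i)" using ex by (rule LeastI_ex)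
  ultimately show ?thesis by blast
qed

lemma lp_in: "lp_ok V r par c1 R s i \<Longrightarrow> s \<in> R \<Longrightarrow> (c1 ^^ i) s \<in> R"
  by (cases i) (auto simp: lp_Suc)

lemma lp_bound: "lp_ok V r par c1 R s i \<Longrightarrow> s \<in> V \<Longrightarrow> i \<le> Max ((\<lambda>x. depth r par x) ` V)"
proof -
  assume a: "lp_ok V r par c1 R s i" "s \<in> V"
  have "depth r par ((c1 ^^ i) s) \<le> Max ((\<lambda>x. depth r par x) ` V)"
    using lp_V[OF a] finV by simp
  then show ?thesis using lp_depth[OF a] by simp
qed

lemma lastl_lp: assumes "s \<in> V" shows "lp_ok V r par c1 R s (GREATEST i. lp_ok V r par c1 R s i)"
  by (rule GreatestI_nat[of _ 0 "Max ((\<lambda>x. depth r par x) ` V)"])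
     (use lp_bound assms in \<open>auto simp: lp_ok_def\<close>)

lemma lastl_in: "s \<in> R \<Longrightarrow> R \<subseteq> V \<Longrightarrow> lastl V r par c1 R s \<in> R"
  unfolding lastl_def using lastl_lp lp_in by blast

lemma CV_sub: "CVm V r par c1 R d x \<Longrightarrow> is_subtree V par R \<Longrightarrow> x \<in> R"
proof (induction rule: CVm.induct)
  case (here R d b)
  obtain i where "lp_ok V r par c1 R (rt par R) i" "b = (c1 ^^ i) (rt par R)" using bd_Some here(1) by blast
  then show ?case using lp_in subtree_rt(1)[OF here(2)] by blast
next
  case (below R d b w x)
  then show ?case using subtree_subR unfolding subR_def by blast
qed

lemma CR_props: assumes "is_subtree V par R"
  shows "CR V r par c1 k R \<subseteq> R" "rt par R \<in> CR V r par c1 k R" "lastl V r par c1 R (rt par R) \<in> CR V r par c1 k R"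
proof -
  note S = subtree_rt[OF assms]
  have l: "lastl V r par c1 R (rt par R) \<in> R" using lastl_in S by blast
  show "CR V r par c1 k R \<subseteq> R" unfolding CR_def CV_def using CV_sub assms S l by auto
  show "rt par R \<in> CR V r par c1 k R" unfolding CR_def using S by auto
  show "lastl V r par c1 R (rt par R) \<in> CR V r par c1 k R" unfolding CR_def using l by auto
qed

lemma CR_nontriv: "CR V r par c1 k R \<noteq> R \<Longrightarrow>
   CR V r par c1 k R = CV V r par c1 R (real (card R) / real k) \<union> {lastl V r par c1 R (rt par R), rt par R}"
  unfolding CR_def by (auto split: if_splits)

end


context tctx begin

inductive canl :: "nat \<Rightarrow> nat \<Rightarrow> 'a set \<Rightarrow> bool" for k where
  c0: "canl k 0 V"
| cS: "canl k n R \<Longrightarrow> component V par (R - CR V r par c1 k R) S \<Longrightarrow> canl k (Suc n) S"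

lemma can_canl: "canonical V r par c1 k R \<Longrightarrow> \<exists>n. canl k n R"
proof (induction rule: canonical.induct)
  case top then show ?case using c0 by blast
next
  case (step R S) then show ?case using cS by blast
qed

lemma canl_can: "canl k n R \<Longrightarrow> canonical V r par c1 k R"
proof (induction rule: canl.induct)
  case c0 then show ?case by (rule canonical.top)
next
  case (cS n R S) show ?case by (rule canonical.step[OF cS.IH cS.hyps(2)])
qed

lemma comp_sub: "component V par A S \<Longrightarrow> is_subtree V par S \<and> S \<subseteq> A"
  unfolding component_def by blast

lemma comp_max: "component V par A S \<Longrightarrow> is_subtree V par S' \<Longrightarrow> S \<subseteq> S' \<Longrightarrow> S' \<subseteq> A \<Longrightarrow> S' = S"
  unfolding component_def by blast

lemma canl_sub: "canl k n R \<Longrightarrow> is_subtree V par R"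
proof (induction rule: canl.induct)
  case c0 then show ?case by (rule subtree_V)
next
  case (cS n R S) then show ?case using comp_sub by blast
qed

lemma canl_0: "canl k 0 R \<Longrightarrow> R = V"
  by (cases rule: canl.cases) auto

lemma canl_Suc: "canl k (Suc n) S \<Longrightarrow> \<exists>P. canl k n P \<and> component V par (P - CR V r par c1 k P) S"
  by (cases rule: canl.cases) auto

lemma not_self: "is_subtree V par P \<Longrightarrow> \<not> P \<subseteq> Y - CR V r par c1 k P"
proof
  assume a: "is_subtree V par P" "P \<subseteq> Y - CR V r par c1 k P"
  have "rt par P \<in> P" "rt par P \<in> CR V r par c1 k P" using subtree_rt(1)[OF a(1)] CR_props(2)[OF a(1)] by auto
  then show False using a(2) by blast
qed

definition Qr :: "nat \<Rightarrow> 'a set \<Rightarrow> 'a set \<Rightarrow> bool" where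
  "Qr k R1 R2 \<longleftrightarrow> R1 \<inter> R2 = {} \<or> R1 = R2 \<or> R1 \<subseteq> R2 - CR V r par c1 k R2 \<or> R2 \<subseteq> R1 - CR V r par c1 k R1"

lemma Qr_sym: "Qr k R1 R2 \<Longrightarrow> Qr k R2 R1"
  unfolding Qr_def by blast

lemma Qr_step: assumes "Qr k R1 P2" "component V par (P2 - CR V r par c1 k P2) R2"
  shows "Qr k R1 R2 \<or> R1 \<subseteq> P2 - CR V r par c1 k P2"
proof -
  have s: "R2 \<subseteq> P2 - CR V r par c1 k P2" using comp_sub[OF assms(2)] by blast
  show ?thesis using assms(1) s unfolding Qr_def by blast
qed

lemma Qr_main: "canl k n1 R1 \<Longrightarrow> canl k n2 R2 \<Longrightarrow> Qr k R1 R2"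
proof (induction "n1 + n2" arbitrary: n1 n2 R1 R2 rule: less_induct)
  case less
  show ?case
  proof (cases n1)
    case 0
    then have R1: "R1 = V" using less.prems(1) canl_0 by blast
    show ?thesis
    proof (cases n2)
      case 0
      then have "R2 = V" using less.prems(2) canl_0 by blast
      then show ?thesis using R1 unfolding Qr_def by blast
    next
      case (Suc m2)
      then obtain P2 where P2: "canl k m2 P2" "component V par (P2 - CR V r par c1 k P2) R2"
        using less.prems(2) canl_Suc by blast
      have "Qr k R1 P2" using less.hyps[of n1 m2 R1 P2] less.prems(1) P2(1) Suc by simp
      then have "Qr k R1 R2 \<or> R1 \<subseteq> P2 - CR V r par c1 k P2" using Qr_step P2(2) by blast
      moreover have "P2 \<subseteq> V" using subtree_rt(4)[OF canl_sub[OF P2(1)]] .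
      ultimately show ?thesis using not_self[OF canl_sub[OF P2(1)], of V] R1 by blast
    qed
  next
    case (Suc m1)
    note s1 = Suc
    then obtain P1 where P1: "canl k m1 P1" "component V par (P1 - CR V r par c1 k P1) R1"
      using less.prems(1) canl_Suc by blast
    show ?thesis
    proof (cases n2)
      case 0
      then have R2: "R2 = V" using less.prems(2) canl_0 by blast
      have "Qr k R2 P1" using less.hyps[of m1 n2 P1 R2] less.prems(2) P1(1) s1 by (simp add: Qr_sym)
      then have "Qr k R2 R1 \<or> R2 \<subseteq> P1 - CR V r par c1 k P1" using Qr_step P1(2) by blast
      moreover have "P1 \<subseteq> V" using subtree_rt(4)[OF canl_sub[OF P1(1)]] .
      ultimately show ?thesis using not_self[OF canl_sub[OF P1(1)], of V] R2 Qr_sym by blast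
    next
      case (Suc m2)
      then obtain P2 where P2: "canl k m2 P2" "component V par (P2 - CR V r par c1 k P2) R2"
        using less.prems(2) canl_Suc by blast
      have q1: "Qr k R1 P2" using less.hyps[of n1 m2 R1 P2] less.prems(1) P2(1) Suc by simp
      have q2: "Qr k R2 P1" using less.hyps[of m1 n2 P1 R2] less.prems(2) P1(1) s1 by (simp add: Qr_sym)
      have q3: "Qr k P1 P2" using less.hyps[of m1 m2 P1 P2] P1(1) P2(1) s1 Suc by simp
      have A: "Qr k R1 R2 \<or> R1 \<subseteq> P2 - CR V r par c1 k P2" using Qr_step q1 P2(2) by blast
      have B: "Qr k R2 R1 \<or> R2 \<subseteq> P1 - CR V r par c1 k P1" using Qr_step q2 P1(2) by blast
      show ?thesis
      proof (cases "Qr k R1 R2 \<or> Qr k R2 R1")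
        case True then show ?thesis using Qr_sym by blast
      next
        case False
        then have A: "R1 \<subseteq> P2 - CR V r par c1 k P2" and B: "R2 \<subseteq> P1 - CR V r par c1 k P1"
          using A B by blast+
        have sR1: "is_subtree V par R1" using comp_sub[OF P1(2)] by blast
        have sR2: "is_subtree V par R2" using comp_sub[OF P2(2)] by blast
        have sP1: "is_subtree V par P1" using canl_sub[OF P1(1)] .
        have sP2: "is_subtree V par P2" using canl_sub[OF P2(1)] .
        have R1ne: "rt par R1 \<in> R1" using subtree_rt(1)[OF sR1] .
        have R1P1: "R1 \<subseteq> P1" using comp_sub[OF P1(2)] by blast
        have R2P2: "R2 \<subseteq> P2" using comp_sub[OF P2(2)] by blast
        have "P1 \<inter> P2 = {} \<or> P1 = P2 \<or> P1 \<subseteq> P2 - CR V r par c1 k P2 \<or> P2 \<subseteq> P1 - CR V r par c1 k P1"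
          using q3 unfolding Qr_def .
        then show ?thesis
        proof (elim disjE)
          assume "P1 \<inter> P2 = {}"
          then show ?thesis using R1ne R1P1 A by blast
        next
          assume e: "P1 = P2"
          show ?thesis
          proof (cases "R1 \<inter> R2 = {}")
            case True then show ?thesis unfolding Qr_def by blast
          next
            case False
            then obtain z where "z \<in> R1" "z \<in> R2" by blast
            then have "R1 = R2" using comp_eq P1(2) P2(2) e by metis
            then show ?thesis unfolding Qr_def by blast
          qed
        next
          assume c: "P1 \<subseteq> P2 - CR V r par c1 k P2"
          have "R2 \<subseteq> P1" using B by blast
          then have "P1 = R2" using comp_max[OF P2(2) sP1] c by blast
          then have False using not_self[OF sR2] B by blast
          then show ?thesis ..
        next
          assume c: "P2 \<subseteq> P1 - CR V r par c1 k P1"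
          have "R1 \<subseteq> P2" using A by blast
          then have "P2 = R1" using comp_max[OF P1(2) sP2] c by blast
          then have False using not_self[OF sR1] A by blast
          then show ?thesis ..
        qed
      qed
    qed
  qed
qed

lemma exists_CR: "canl k n R \<Longrightarrow> u \<in> R \<Longrightarrow> \<exists>m R'. canl k m R' \<and> u \<in> CR V r par c1 k R'"
proof (induction "card R" arbitrary: n R rule: less_induct)
  case less
  show ?case
  proof (cases "u \<in> CR V r par c1 k R")
    case True then show ?thesis using less.prems(1) by blast
  next
    case False
    have sR: "is_subtree V par R" using canl_sub[OF less.prems(1)] .
    have RV: "R \<subseteq> V" using subtree_rt(4)[OF sR] .
    have uA: "u \<in> R - CR V r par c1 k R" using False less.prems(2) by blast
    then obtain S where S: "component V par (R - CR V r par c1 k R) S" "u \<in> S"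
      using comp_exists[of u "R - CR V r par c1 k R"] RV by blast
    have cS: "canl k (Suc n) S" using cS[OF less.prems(1) S(1)] .
    have SR: "S \<subseteq> R - CR V r par c1 k R" using comp_sub[OF S(1)] by blast
    have "rt par R \<in> R" "rt par R \<in> CR V r par c1 k R" using subtree_rt(1)[OF sR] CR_props(2)[OF sR] by auto
    then have "S \<subset> R" using SR by blast
    moreover have "finite R" using RV finV by (rule finite_subset)
    ultimately have "card S < card R" by (rule psubset_card_mono[rotated])
    then show ?thesis using less.hyps[OF _ cS S(2)] by blast
  qed
qed

lemma CR_in: "canl k n R \<Longrightarrow> u \<in> CR V r par c1 k R \<Longrightarrow> u \<in> R"
  using CR_props(1)[OF canl_sub] by blast

lemma Tcan_prop: assumes "u \<in> V"
  shows "canonical V r par c1 k (Tcan V r par c1 k u) \<and> u \<in> CR V r par c1 k (Tcan V r par c1 k u)"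
proof -
  obtain m R where R: "canl k m R" "u \<in> CR V r par c1 k R"
    using exists_CR[OF c0 assms] by blast
  have ex: "canonical V r par c1 k R \<and> u \<in> CR V r par c1 k R" using canl_can R by blast
  have un: "R' = R" if a: "canonical V r par c1 k R' \<and> u \<in> CR V r par c1 k R'" for R'
  proof -
    obtain m' where m': "canl k m' R'" using can_canl a by blast
    have q: "Qr k R' R" using Qr_main[OF m' R(1)] .
    have u1: "u \<in> R'" using CR_in m' a by blast
    have u2: "u \<in> R" using CR_in R by blast
    show "R' = R" using q u1 u2 a R(2) unfolding Qr_def by blast
  qed
  show ?thesis unfolding Tcan_def
    by (rule theI[of _ R]) (use ex un in blast)+
qed

end


context tctx begin

lemma child_not_anc: assumes "w \<in> children V r par x" "anc par w x" shows False
proof -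
  note c = child_props[OF assms(1)]
  have "anc par x w" using anc_par[of w] c by simp
  moreover have "x \<in> V" using parV c by metis
  ultimately have "w = x" using anc_antisym[OF assms(2)] by blast
  then have "par w = w" using c by simp
  then show False using depth_par[of w] c by simp
qed

lemma c1_add: "(c1 ^^ (a + b)) s = (c1 ^^ a) ((c1 ^^ b) s)"
  by (simp add: funpow_add)

lemma CV_struct: "CVm V r par c1 R d w \<Longrightarrow> is_subtree V par R \<Longrightarrow> x \<in> R \<Longrightarrow> w \<in> children V r par x
  \<Longrightarrow> \<not> CVm V r par c1 R d x \<Longrightarrow>
  \<exists>s i. s \<in> R \<and> lp_ok V r par c1 R s (Suc i) \<and> (c1 ^^ i) s = x \<and> (c1 ^^ Suc i) s = w
     \<and> (s = rt par R \<or> CVm V r par c1 R d (par s))"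
proof (induction arbitrary: x rule: CVm.induct)
  case (here R d b)
  obtain i0 where i0: "lp_ok V r par c1 R (rt par R) i0" "b = (c1 ^^ i0) (rt par R)"
    using bd_Some[OF here(1)] by blast
  note S = subtree_rt[OF here(2)]
  show ?case
  proof (cases i0)
    case 0
    then have "b = rt par R" using i0 by simp
    then have "anc par b x" using S(2)[OF here(3)] by simp
    then show ?thesis using child_not_anc here(4) by blast
  next
    case (Suc i)
    have rV: "rt par R \<in> V" using S(1) S(4) by blast
    have "par b = (c1 ^^ i) (rt par R)" using lp_par[of R "rt par R" i] i0 Suc rV by simp
    moreover have "par b = x" using child_props[OF here(4)] by simp
    ultimately show ?thesis using i0 Suc S(1) by auto
  qed
next
  case (below R d b w' wv)
  note S = subtree_rt[OF below(6)]
  have sub: "is_subtree V par (subR par R w')" using subtree_subR[OF below(6) below(3)] .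
  have CVb: "CVm V r par c1 R d b" using CVm.here[OF below(1)] .
  have nx: "\<not> CVm V r par c1 (subR par R w') d x"
    using CVm.below[OF below(1) below(2) below(3)] below(9) by blast
  have wvin: "wv \<in> subR par R w'" using CV_sub[OF below(4) sub] .
  have subRR: "subR par R w' \<subseteq> R" unfolding subR_def by blast
  show ?case
  proof (cases "x \<in> subR par R w'")
    case True
    obtain s i where si: "s \<in> subR par R w'" "lp_ok V r par c1 (subR par R w') s (Suc i)"
      "(c1 ^^ i) s = x" "(c1 ^^ Suc i) s = wv"
      "s = rt par (subR par R w') \<or> CVm V r par c1 (subR par R w') d (par s)"
      using below.IH[OF sub True below(8) nx] by blast
    have "s = rt par R \<or> CVm V r par c1 R d (par s)"
    proof (cases "s = rt par (subR par R w')")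
      case True
      then have "s = w'" using rt_subR[OF S(4) below(3)] by simp
      then have "par s = b" using child_props[OF below(2)] by simp
      then show ?thesis using CVb by simp
    next
      case False
      then have "CVm V r par c1 (subR par R w') d (par s)" using si(5) by blast
      then show ?thesis using CVm.below[OF below(1) below(2) below(3)] by blast
    qed
    then show ?thesis using si(1-4) subRR lp_monoR[OF si(2) subRR] by blast
  next
    case False
    have "anc par w' wv" using wvin unfolding subR_def by blast
    then have "w' = wv \<or> anc par w' (par wv)" by (rule anc_cases)
    moreover have "par wv = x" using child_props[OF below(8)] by simp
    ultimately have "w' = wv \<or> anc par w' x" by blast
    moreover have "\<not> anc par w' x" using False below(7) unfolding subR_def by blast
    ultimately have "w' = wv" by blast
    then have "x = b" using child_props[OF below(8)] child_props[OF below(2)] by simp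
    then show ?thesis using CVb below(9) by blast
  qed
qed

lemma leaves_lastl:
  assumes S: "is_subtree V par S" and sR: "s \<in> V" and lp: "lp_ok V r par c1 R s (Suc i)"
    and x: "(c1 ^^ i) s = x" and w: "(c1 ^^ Suc i) s = w" and xS: "x \<in> S" and wS: "w \<notin> S"
    and st: "anc par s (rt par S)"
  shows "x = lastl V r par c1 S (rt par S)"
proof -
  let ?t = "rt par S"
  note SS = subtree_rt[OF S]
  have tx: "anc par ?t x" using SS(2)[OF xS] .
  obtain a where a: "(par ^^ a) x = ?t" using tx unfolding anc_def by blast
  have lpi: "lp_ok V r par c1 R s i" using lp_mono[OF lp] by simp
  have sx: "(par ^^ i) x = s" using lp_iter[OF lpi sR, of i] x by simp
  obtain j where j: "j \<le> i" "?t = (c1 ^^ j) s"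
  proof (cases "a \<le> i")
    case True
    have "(par ^^ a) x = (c1 ^^ (i - a)) s" using lp_iter[OF lpi sR True] x by simp
    then show ?thesis using that[of "i - a"] a by simp
  next
    case False
    have "(par ^^ a) x = (par ^^ (a - i)) ((par ^^ i) x)" using iter_add[of "a - i" i x] False by simp
    then have "anc par ?t s" unfolding anc_def using a sx by metis
    then have "?t = s" using anc_antisym st sR by blast
    then show ?thesis using that[of 0] by simp
  qed
  let ?g = "i - j"
  have xg: "(c1 ^^ ?g) ?t = x" using j c1_add[of ?g j s] x by simp
  have wg: "(c1 ^^ Suc ?g) ?t = w" using j c1_add[of "Suc ?g" j s] w by (simp add: Suc_diff_le)
  have lpg: "lp_ok V r par c1 S ?t ?g"
    unfolding lp_ok_def
  proof (intro allI impI conjI)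
    fix m assume m: "m < ?g"
    have e1: "(c1 ^^ m) ?t = (c1 ^^ (m + j)) s" using j c1_add[of m j s] by simp
    have "m + j < Suc i" using m j by simp
    then show "children V r par ((c1 ^^ m) ?t) \<noteq> {}" using lp e1 unfolding lp_ok_def by simp
    have e2: "(c1 ^^ Suc m) ?t = (c1 ^^ (Suc m + j)) s" using j c1_add[of "Suc m" j s] by simp
    have l1: "lp_ok V r par c1 R s (Suc m + j)" using lp_mono[OF lp] m j by simp
    have "anc par ?t ((c1 ^^ (Suc m + j)) s)" using lp_anc[OF l1 sR, of j] j by simp
    moreover have "anc par ((c1 ^^ (Suc m + j)) s) x" using lp_anc[OF lpi sR, of "Suc m + j"] x m j by simp
    ultimately show "(c1 ^^ Suc m) ?t \<in> S" using e2 subtree_between[OF S SS(1) xS] by simp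
  qed
  have nlp: "\<not> lp_ok V r par c1 S ?t (Suc ?g)" using wg wS lp_Suc by blast
  have "(GREATEST h. lp_ok V r par c1 S ?t h) = ?g"
  proof (rule Greatest_equality)
    show "lp_ok V r par c1 S ?t ?g" by (rule lpg)
    fix h assume "lp_ok V r par c1 S ?t h"
    then show "h \<le> ?g" using nlp lp_mono[of S ?t h "Suc ?g"] by (cases "h \<le> ?g") auto
  qed
  then show ?thesis unfolding lastl_def using xg by simp
qed

lemma inv: "canl k n R \<Longrightarrow> x \<in> R \<Longrightarrow> w \<in> children V r par x \<Longrightarrow> w \<notin> R
   \<Longrightarrow> x = lastl V r par c1 R (rt par R)"
proof (induction arbitrary: x w rule: canl.induct)
  case c0 then show ?case using child_props by blast
next
  case (cS n R S)
  have sR: "is_subtree V par R" using canl_sub[OF cS.hyps(1)] .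
  note RR = subtree_rt[OF sR]
  have sS: "is_subtree V par S" and SA: "S \<subseteq> R - CR V r par c1 k R" using comp_sub[OF cS.hyps(2)] by auto
  have xR: "x \<in> R" and xC: "x \<notin> CR V r par c1 k R" using SA cS.prems(1) by auto
  note wc = child_props[OF cS.prems(2)]
  show ?case
  proof (cases "w \<in> R")
    case False
    then have "x = lastl V r par c1 R (rt par R)" using cS.IH xR cS.prems(2) by blast
    then show ?thesis using CR_props(3)[OF sR] xC by simp
  next
    case wR: True
    show ?thesis
    proof (cases "w \<in> CR V r par c1 k R")
      case False
      have "is_subtree V par (insert w S)" using subtree_insert[OF sS cS.prems(1,2)] .
      moreover have "insert w S \<subseteq> R - CR V r par c1 k R" using SA wR False by blast
      ultimately have "insert w S = S" using comp_max[OF cS.hyps(2)] by blast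
      then show ?thesis using cS.prems(3) by blast
    next
      case wC: True
      have ne: "CR V r par c1 k R \<noteq> R" using xR xC by blast
      have star: "\<exists>s i. s \<in> R \<and> lp_ok V r par c1 R s (Suc i) \<and> (c1 ^^ i) s = x \<and> (c1 ^^ Suc i) s = w
         \<and> (s = rt par R \<or> par s \<in> CR V r par c1 k R)"
      proof -
        have "w \<in> CV V r par c1 R (real (card R) / real k) \<or> w = lastl V r par c1 R (rt par R) \<or> w = rt par R"
          using wC CR_nontriv[OF ne] by blast
        moreover have "w \<noteq> rt par R"
        proof
          assume "w = rt par R"
          then have "anc par w x" using RR(2)[OF xR] by simp
          then show False using child_not_anc cS.prems(2) by blast
        qed
        ultimately consider (cv) "w \<in> CV V r par c1 R (real (card R) / real k)"
          | (ll) "w = lastl V r par c1 R (rt par R)" "w \<noteq> rt par R" by blast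
        then show ?thesis
        proof cases
          case cv
          let ?d = "real (card R) / real k"
          have "CVm V r par c1 R ?d w" using cv unfolding CV_def by blast
          moreover have "\<not> CVm V r par c1 R ?d x"
            using xC CR_nontriv[OF ne] unfolding CV_def by blast
          ultimately obtain s i where si: "s \<in> R" "lp_ok V r par c1 R s (Suc i)" "(c1 ^^ i) s = x"
            "(c1 ^^ Suc i) s = w" "s = rt par R \<or> CVm V r par c1 R ?d (par s)"
            using CV_struct[OF _ sR xR cS.prems(2)] by blast
          have "s = rt par R \<or> par s \<in> CR V r par c1 k R"
            using si(5) CR_nontriv[OF ne] unfolding CV_def by blast
          then show ?thesis using si(1-4) by blast
        next
          case ll
          let ?G = "GREATEST i. lp_ok V r par c1 R (rt par R) i"
          have rV: "rt par R \<in> V" using RR(1) RR(4) by blast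
          have lpG: "lp_ok V r par c1 R (rt par R) ?G" using lastl_lp[OF rV] .
          have wG: "w = (c1 ^^ ?G) (rt par R)" using ll(1) unfolding lastl_def by simp
          obtain i where i: "?G = Suc i" using ll(2) wG by (cases ?G) auto
          have "par w = (c1 ^^ i) (rt par R)" using lp_par[of R "rt par R" i] lpG i rV wG by simp
          then have "(c1 ^^ i) (rt par R) = x" using wc by simp
          then show ?thesis using lpG i wG RR(1) by auto
        qed
      qed
      then obtain s i where si: "s \<in> R" "lp_ok V r par c1 R s (Suc i)" "(c1 ^^ i) s = x"
        "(c1 ^^ Suc i) s = w" "s = rt par R \<or> par s \<in> CR V r par c1 k R" by blast
      note SS = subtree_rt[OF sS]
      have sV: "s \<in> V" using si(1) RR(4) by blast
      have lpi: "lp_ok V r par c1 R s i" using lp_mono[OF si(2)] by simp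
      have sx: "anc par s x" using lp_anc[OF lpi sV, of 0] si(3) by simp
      have tx: "anc par (rt par S) x" using SS(2)[OF cS.prems(1)] .
      have st: "anc par s (rt par S)"
      proof -
        have "anc par (rt par S) s \<or> anc par s (rt par S)" using anc_linear[OF tx sx] .
        moreover have False if a: "anc par (rt par S) s" "rt par S \<noteq> s"
        proof -
          have "anc par (rt par S) (par s)" using anc_cases[OF a(1)] a(2) by blast
          moreover have "anc par (par s) x" using anc_trans[OF anc_par sx] .
          ultimately have psS: "par s \<in> S" using subtree_between[OF sS SS(1) cS.prems(1)] by blast
          show False
          proof (cases "s = rt par R")
            case True
            have "rt par S \<in> R" using SS(1) SA by blast
            then have "anc par s (rt par S)" using RR(2) True by simp
            then show False using anc_antisym[OF a(1) _ sV] a(2) by blast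
          next
            case False
            then have "par s \<in> CR V r par c1 k R" using si(5) by blast
            then show False using psS SA by blast
          qed
        qed
        ultimately show ?thesis using anc_refl by blast
      qed
      show ?thesis using leaves_lastl[OF sS sV si(2) si(3) si(4) cS.prems(1) cS.prems(3) st] .
    qed
  qed
qed

end


context tctx begin

lemma lca_props: assumes "u \<in> V" "v \<in> V"
  shows "anc par (lca par u v) u \<and> anc par (lca par u v) v \<and>
    (\<forall>c'. anc par c' u \<and> anc par c' v \<longrightarrow> anc par c' (lca par u v))"
proof -
  let ?Q = "\<lambda>i. anc par ((par ^^ i) u) v"
  have exq: "\<exists>i. ?Q i" using depth_root[OF assms(1)] anc_r[OF assms(2)] by metis
  define i0 where "i0 = (LEAST i. ?Q i)"
  define c where "c = (par ^^ i0) u"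
  have c1: "anc par c u" unfolding c_def anc_def by blast
  have c2: "anc par c v" unfolding c_def i0_def using LeastI_ex[OF exq] .
  have c3: "anc par c' c" if a: "anc par c' u" "anc par c' v" for c'
  proof -
    have "anc par c' c \<or> anc par c c'" using anc_linear[OF a(1) c1] .
    moreover have "anc par c' c" if b: "anc par c c'"
    proof -
      obtain a where aa: "(par ^^ a) u = c'" using a(1) unfolding anc_def by blast
      show ?thesis
      proof (cases "i0 \<le> a")
        case True
        have "(par ^^ a) u = (par ^^ (a - i0)) ((par ^^ i0) u)" using iter_add[of "a - i0" i0 u] True by simp
        then have "(par ^^ (a - i0)) c = c'" using aa unfolding c_def by simp
        then show ?thesis unfolding anc_def by blast
      next
        case False
        then have "a < (LEAST i. ?Q i)" unfolding i0_def by simp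
        then have "\<not> ?Q a" by (rule not_less_Least)
        then show ?thesis using aa a(2) by simp
      qed
    qed
    ultimately show ?thesis by blast
  qed
  have cV: "c \<in> V" using anc_V[OF c1 assms(1)] .
  have "lca par u v = c" unfolding lca_def
  proof (rule the_equality)
    show "anc par c u \<and> anc par c v \<and> (\<forall>c'. anc par c' u \<and> anc par c' v \<longrightarrow> anc par c' c)"
      using c1 c2 c3 by blast
    fix c'' assume h: "anc par c'' u \<and> anc par c'' v \<and> (\<forall>c'. anc par c' u \<and> anc par c' v \<longrightarrow> anc par c' c'')"
    have "anc par c c''" using h c1 c2 by blast
    moreover have "anc par c'' c" using c3 h by blast
    ultimately show "c'' = c" using anc_antisym cV by blast
  qed
  then show ?thesis using c1 c2 c3 by simp
qed

lemma last_filter1: assumes "j < m" "P (f j)" "\<forall>i<j. \<not> P (f i)"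
  shows "last (filter P (xs @ rev (map f [0..<m]))) = f j"
proof -
  have e: "[0..<m] = [0..<j] @ [j..<m]" using upt_add_eq_append[of 0 j "m - j"] assms(1) by simp
  have "[0..<m] = [0..<j] @ j # [Suc j..<m]" unfolding e using assms(1) upt_conv_Cons[of j m] by simp
  moreover have "filter P (rev (map f [0..<j])) = []" using assms(3) by (simp add: filter_empty_conv)
  ultimately show ?thesis using assms(2) by simp
qed

lemma last_filter2: assumes "\<forall>i<m. \<not> P (f i)" "xs \<noteq> []" "P (last xs)"
  shows "last (filter P (xs @ rev (map f [0..<m]))) = last xs"
proof -
  have "filter P (rev (map f [0..<m])) = []" using assms(1) by (simp add: filter_empty_conv)
  moreover have "filter P xs = filter P (butlast xs) @ [last xs]"
  proof -
    have "xs = butlast xs @ [last xs]" using assms(2) by simp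
    then have "filter P xs = filter P (butlast xs @ [last xs])" by metis
    then show ?thesis using assms(3) by simp
  qed
  ultimately show ?thesis by simp
qed

lemma main:
  assumes uV: "u \<in> V" and vV: "v \<in> V"
    and v_notin: "v \<notin> Tcan V r par c1 k u"
    and Xne: "{y \<in> CR V r par c1 k (Tcan V r par c1 k u). anc par y v} \<noteq> {}"
  shows "last (filter (\<lambda>w. w \<in> Tcan V r par c1 k u) (tpath r par u v))
           \<in> {y \<in> CR V r par c1 k (Tcan V r par c1 k u). anc par y v}
       \<and> (\<forall>y \<in> {y \<in> CR V r par c1 k (Tcan V r par c1 k u). anc par y v}.
           depth r par y \<le> depth r par (last (filter (\<lambda>w. w \<in> Tcan V r par c1 k u) (tpath r par u v))))"
proof -
  define R where "R = Tcan V r par c1 k u"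
  have T: "canonical V r par c1 k R \<and> u \<in> CR V r par c1 k R" using Tcan_prop[OF uV] unfolding R_def .
  obtain n where n: "canl k n R" using can_canl T by blast
  have sR: "is_subtree V par R" using canl_sub[OF n] .
  note RR = subtree_rt[OF sR]
  have uR: "u \<in> R" using CR_in[OF n] T by blast
  have vR: "v \<notin> R" using v_notin unfolding R_def .
  obtain y0 where y0: "y0 \<in> CR V r par c1 k R" "anc par y0 v" using Xne unfolding R_def by blast
  have y0R: "y0 \<in> R" using CR_in[OF n y0(1)] .
  have rv: "anc par (rt par R) v" using anc_trans[OF RR(2)[OF y0R] y0(2)] .
  let ?P = "\<lambda>j. (par ^^ j) v \<in> R"
  obtain i1 where i1: "(par ^^ i1) v = rt par R" using rv unfolding anc_def by blast
  have exP: "\<exists>j. ?P j" using i1 RR(1) by (intro exI[of _ i1]) simp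
  define j0 where "j0 = (LEAST j. ?P j)"
  define x0 where "x0 = (par ^^ j0) v"
  have x0R: "x0 \<in> R" unfolding x0_def j0_def using LeastI_ex[OF exP] .
  have notP: "\<not> ?P i" if "i < j0" for i using not_less_Least[of i ?P] that unfolding j0_def by blast
  have j0ne: "j0 \<noteq> 0" using x0R vR unfolding x0_def by (cases j0) auto
  define wv where "wv = (par ^^ (j0 - 1)) v"
  have wvR: "wv \<notin> R" using notP[of "j0 - 1"] j0ne unfolding wv_def by simp
  have wvV: "wv \<in> V" unfolding wv_def using iterV[OF vV] .
  have pw: "par wv = x0" unfolding wv_def x0_def using j0ne by (cases j0) auto
  have wvr: "wv \<noteq> r" using pw parr wvR x0R by auto
  have wch: "wv \<in> children V r par x0" unfolding children_def using wvV wvr pw by blast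
  have x0l: "x0 = lastl V r par c1 R (rt par R)" using inv[OF n x0R wch wvR] .
  have x0C: "x0 \<in> CR V r par c1 k R" using CR_props(3)[OF sR] x0l by simp
  have x0v: "anc par x0 v" unfolding anc_def x0_def by blast
  have deep: "depth r par y \<le> depth r par x0" if y: "y \<in> R" "anc par y v" for y
  proof -
    obtain j where j: "(par ^^ j) v = y" using y(2) unfolding anc_def by blast
    have "j0 \<le> j" unfolding j0_def using Least_le[of ?P j] j y(1) by simp
    then show ?thesis using depth_iter[OF vV, of j] depth_iter[OF vV, of j0] j x0_def by simp
  qed
  define c where "c = lca par u v"
  have cp: "anc par c u" "anc par c v" "\<And>c'. anc par c' u \<Longrightarrow> anc par c' v \<Longrightarrow> anc par c' c"
    using lca_props[OF uV vV] unfolding c_def by blast+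
  have rc: "anc par (rt par R) c" using cp(3)[OF RR(2)[OF uR] rv] .
  have cR: "c \<in> R" using subtree_between[OF sR RR(1) uR rc cp(1)] .
  define m where "m = depth r par v - depth r par c"
  define f where "f = (\<lambda>i. (par ^^ i) v)"
  have fm: "f m = c" unfolding f_def m_def using anc_depth_iter[OF cp(2) vV] .
  have j0m: "j0 \<le> m" unfolding j0_def using Least_le[of ?P m] fm cR unfolding f_def by simp
  define xs where "xs = upl r par u c"
  have xsne: "xs \<noteq> []" unfolding xs_def upl_def by simp
  have xslast: "last xs = c" unfolding xs_def upl_def using anc_depth_iter[OF cp(1) uV] by simp
  have tp: "tpath r par u v = xs @ rev (map f [0..<m])"
    unfolding tpath_def Let_def xs_def c_def[symmetric] upl_def f_def m_def by simp
  have L: "last (filter (\<lambda>w. w \<in> R) (tpath r par u v)) = x0"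
  proof (cases "j0 < m")
    case True
    have "last (filter (\<lambda>w. w \<in> R) (xs @ rev (map f [0..<m]))) = f j0"
      by (rule last_filter1) (use True x0R notP in \<open>auto simp: f_def x0_def\<close>)
    then show ?thesis using tp x0_def f_def by simp
  next
    case False
    then have e: "j0 = m" using j0m by simp
    have "last (filter (\<lambda>w. w \<in> R) (xs @ rev (map f [0..<m]))) = last xs"
      by (rule last_filter2) (use e notP xsne xslast cR in \<open>auto simp: f_def\<close>)
    then show ?thesis using tp xslast fm e x0_def f_def by simp
  qed
  show ?thesis unfolding R_def[symmetric] L using x0C x0v deep CR_in[OF n] by blast
qed

end

theorem lemma5:
  fixes V :: "'a set" and r :: 'a and par c1 :: "'a \<Rightarrow> 'a"
    and wt :: "'a \<Rightarrow> real" and k :: nat and u v :: 'a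
  assumes tree: "is_rtree V r par"
    and weights: "\<forall>w\<in>V - {r}. wt w > 0"
    and lm: "leftmost_choice V r par c1"
    and k4: "k \<ge> 4"
    and uV: "u \<in> V" and vV: "v \<in> V"
    and v_notin: "v \<notin> Tcan V r par c1 k u"
    and Xne: "{y \<in> CR V r par c1 k (Tcan V r par c1 k u). anc par y v} \<noteq> {}"
  shows "last (filter (\<lambda>w. w \<in> Tcan V r par c1 k u) (tpath r par u v))
           \<in> {y \<in> CR V r par c1 k (Tcan V r par c1 k u). anc par y v}
       \<and> (\<forall>y \<in> {y \<in> CR V r par c1 k (Tcan V r par c1 k u). anc par y v}.
           depth r par y \<le> depth r par (last (filter (\<lambda>w. w \<in> Tcan V r par c1 k u) (tpath r par u v))))"
proof -
  interpret tctx V r par c1 using tree lm by unfold_locales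
  show ?thesis using main[OF uV vV v_notin Xne] .
qed

end
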